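(* Let $K$ be a continuous $1$-periodic function which is the covariance kernel of a mean-zero stationary Gaussian process on $S^1=[0,1)$ with almost surely continuous sample paths, normalized so that $\int_0^1K(x)\,dx=1$. For real $\lambda$ let \[ A_\lambda=\Big\{q:\ q=\lambda+p'+p^2 \text{ for some } 1\text{-periodic } p\in C^\infty \text{ with } \int_0^1p=0\Big\},\qquad J(q)=\tfrac12\langle q,\mathbf{K}^{-1}q\rangle. \] Then \[ \liminf_{\lambda\to-\infty}\frac{1}{\lambda^2}\Big\{\inf_{q\in A_\lambda}J(q)\Big\}\ge\frac{1}{2K(0)}. \]
   Context: $\mathbf{K}f(x)=\int_0^1K(x-y)f(y)\,dy$ (with $K$ extended periodically) is the covariance operator; it acts diagonally on Fourier modes $e^{2\pi inx}$ with nonnegative eigenvalues $\hat K(n)=\int_0^1K(x)e^{-2\pi inx}dx$. For a periodic $q$ with Fourier coefficients $\hat q(n)$, $\langle q,\mathbf{K}^{-1}q\rangle=\sum_n|\hat q(n)|^2/\hat K(n)$, interpreted as $+\infty$ if the sum diverges or if $\hat q(n)\neq0$ for some $n$ with $\hat K(n)=0$. *)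

theory Defs
  imports "HOL-Probability.Probability"
begin

definition fourier_coeff :: "(real \<Rightarrow> real) \<Rightarrow> int \<Rightarrow> complex" where
  "fourier_coeff f n =
     integral {0..1} (\<lambda>x. complex_of_real (f x) * cis (- 2 * pi * real_of_int n * x))"

text \<open>The quadratic form q, K^{-1} q = sum over n of |q_n|^2 / K_n, with value infinity
  if the sum diverges or if q_n is nonzero for some n with K_n = 0.  Eigenvalues of the
  covariance operator are the (real, nonnegative) Fourier coefficients of K.\<close>
definition inv_cov_form :: "(real \<Rightarrow> real) \<Rightarrow> (real \<Rightarrow> real) \<Rightarrow> ennreal" where
  "inv_cov_form K q =
     (\<integral>\<^sup>+ n. (if Re (fourier_coeff K n) = 0
               then (if fourier_coeff q n = 0 then 0 else \<infinity>)
               else ennreal ((cmod (fourier_coeff q n))\<^sup>2 / Re (fourier_coeff K n)))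
        \<partial>count_space (UNIV :: int set))"

definition J_functional :: "(real \<Rightarrow> real) \<Rightarrow> (real \<Rightarrow> real) \<Rightarrow> ennreal" where
  "J_functional K q = inv_cov_form K q / 2"

definition smooth_fun :: "(real \<Rightarrow> real) \<Rightarrow> bool" where
  "smooth_fun p \<longleftrightarrow> (\<forall>k x. ((deriv ^^ k) p) differentiable (at x))"

definition A_set :: "real \<Rightarrow> (real \<Rightarrow> real) set" where
  "A_set lam = {q. \<exists>p. smooth_fun p \<and> (\<forall>x. p (x + 1) = p x) \<and> integral {0..1} p = 0
                      \<and> q = (\<lambda>x. lam + deriv p x + (p x)\<^sup>2)}"

definition centered_gaussian_rv :: "'a measure \<Rightarrow> ('a \<Rightarrow> real) \<Rightarrow> bool" where
  "centered_gaussian_rv M Y \<longleftrightarrow> Y \<in> borel_measurable M \<and>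
     ((AE \<omega> in M. Y \<omega> = 0) \<or>
      (\<exists>\<sigma>>0. distributed M lborel Y (\<lambda>x. ennreal (normal_density 0 \<sigma> x))))"

text \<open>Mean-zero stationary Gaussian process indexed by the reals (here: the circle, via
  the 1-periodic covariance) with covariance kernel K and a.s. continuous sample paths.\<close>
definition continuous_stationary_gaussian_process ::
    "'a measure \<Rightarrow> (real \<Rightarrow> 'a \<Rightarrow> real) \<Rightarrow> (real \<Rightarrow> real) \<Rightarrow> bool" where
  "continuous_stationary_gaussian_process M X K \<longleftrightarrow>
     prob_space M \<and>
     (\<forall>I c. finite I \<longrightarrow> centered_gaussian_rv M (\<lambda>\<omega>. \<Sum>t\<in>I. c t * X t \<omega>)) \<and>
     (\<forall>s t. integrable M (\<lambda>\<omega>. X s \<omega> * X t \<omega>) \<and>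
            (\<integral>\<omega>. X s \<omega> * X t \<omega> \<partial>M) = K (s - t)) \<and>
     (AE \<omega> in M. continuous_on UNIV (\<lambda>t. X t \<omega>))"

end

theory Submission
  imports Defs
begin

lemma cis_int_has_integral:
  fixes j :: int
  shows "((\<lambda>t::real. cis (2*pi* of_int j*t)) has_integral (if j = 0 then 1 else 0)) {0..1}"
proof (cases "j = 0")
  case True
  then show ?thesis using has_integral_const_real[of "1::complex" 0 1] by simp
next
  case False
  define a where "a = \<i> * complex_of_real (2*pi* of_int j)"
  have a0: "a \<noteq> 0" using False by (simp add: a_def)
  have eq: "cis (2*pi* of_int j*t) = exp (a * complex_of_real t)" for t
    by (simp add: a_def cis_conv_exp mult_ac)
  have "\<And>t. t \<in> {0..1} \<Longrightarrow> ((\<lambda>x. exp (a * x) / a) has_vector_derivative exp (a * t)) (at t within {0..1})"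
    using a0
    by (intro derivative_eq_intros has_complex_derivative_imp_has_vector_derivative [unfolded o_def] | simp)+
  then have "((\<lambda>t. exp(a * of_real t)) has_integral exp(a * complex_of_real 1)/a - exp(a * of_real 0)/a) {0..1}"
    by (meson fundamental_theorem_of_calculus zero_le_one)
  moreover have "exp(a * complex_of_real 1) = 1"
    using eq[of 1] by simp
  ultimately show ?thesis using False by (simp add: eq)
qed


lemma cos_pow_expand:
  "complex_of_real (4^m * cos(pi*t)^(2*m)) =
     (\<Sum>k\<le>2*m. of_nat (2*m choose k) * cis (2 * pi * of_int (int k - int m) * t))"
proof -
  have c: "complex_of_real (2 * cos (pi*t)) = cis (pi*t) + cis (-(pi*t))"
    by (simp add: complex_eq_iff)
  have "complex_of_real (4^m * cos(pi*t)^(2*m)) = (complex_of_real (2 * cos (pi*t)))^(2*m)"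
    by (simp add: power_mult_distrib power_mult)
  also have "\<dots> = (\<Sum>k\<le>2*m. of_nat (2*m choose k) * cis (pi*t) ^ k * cis (-(pi*t)) ^ (2*m-k))"
    unfolding c binomial_ring ..
  also have "\<dots> = (\<Sum>k\<le>2*m. of_nat (2*m choose k) * cis (2 * pi * of_int (int k - int m) * t))"
  proof (rule sum.cong[OF refl])
    fix k assume "k \<in> {..2*m}"
    then have k: "k \<le> 2*m" by simp
    have "cis (pi*t) ^ k * cis (-(pi*t)) ^ (2*m-k) = cis (real k * (pi*t) + real (2*m-k) * (-(pi*t)))"
      by (subst Complex.DeMoivre)+ (rule cis_mult)
    also have "real k * (pi*t) + real (2*m-k) * (-(pi*t)) = 2 * pi * of_int (int k - int m) * t"
      using k by (simp add: of_nat_diff algebra_simps)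
    finally show "of_nat (2*m choose k) * cis (pi*t) ^ k * cis (-(pi*t)) ^ (2*m-k) =
        of_nat (2*m choose k) * cis (2 * pi * of_int (int k - int m) * t)" by simp
  qed
  finally show ?thesis .
qed


lemma fourier_coeff_has_integral:
  assumes "continuous_on UNIV f"
  shows "((\<lambda>x. complex_of_real (f x) * cis (- 2 * pi * real_of_int n * x)) has_integral fourier_coeff f n) {0..1}"
proof -
  have "continuous_on {0..1} (\<lambda>x. complex_of_real (f x) * cis (- 2 * pi * real_of_int n * x))"
    using assms by (intro continuous_intros) (auto intro: continuous_on_subset)
  then show ?thesis unfolding fourier_coeff_def
    by (intro integrable_integral integrable_continuous_interval)
qed

lemma fourier_kernel_sum:
  assumes f: "continuous_on UNIV f"
  shows "(\<Sum>k\<le>2*m. of_nat (2*m choose k) * fourier_coeff f (int k - int m) * cis (2 * pi * of_int (int k - int m) * x0))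
        = complex_of_real (4^m * integral {0..1} (\<lambda>t. f t * cos(pi*(x0-t))^(2*m)))"
proof -
  let ?c = "\<lambda>k. of_nat (2*m choose k) * cis (2 * pi * of_int (int k - int m) * x0)"
  have "((\<lambda>t. \<Sum>k\<le>2*m. ?c k * (complex_of_real (f t) * cis (- 2 * pi * real_of_int (int k - int m) * t)))
        has_integral (\<Sum>k\<le>2*m. ?c k * fourier_coeff f (int k - int m))) {0..1}" (is "(?F has_integral _) _")
    by (intro has_integral_sum has_integral_mult_right fourier_coeff_has_integral f) auto
  moreover have eq: "(\<Sum>k\<le>2*m. ?c k * (complex_of_real (f t) * cis (- 2 * pi * real_of_int (int k - int m) * t)))
      = complex_of_real (4^m * (f t * cos(pi*(x0-t))^(2*m)))" for t
  proof -
    have "(\<Sum>k\<le>2*m. ?c k * (complex_of_real (f t) * cis (- 2 * pi * real_of_int (int k - int m) * t)))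
       = complex_of_real (f t) * (\<Sum>k\<le>2*m. of_nat (2*m choose k) * cis (2 * pi * of_int (int k - int m) * (x0 - t)))"
      unfolding sum_distrib_left
    proof (rule sum.cong[OF refl])
      fix k
      have "cis (2 * pi * of_int (int k - int m) * x0) * cis (- 2 * pi * real_of_int (int k - int m) * t)
          = cis (2 * pi * of_int (int k - int m) * (x0 - t))"
        by (simp add: cis_mult algebra_simps)
      then show "?c k * (complex_of_real (f t) * cis (- 2 * pi * real_of_int (int k - int m) * t)) =
         complex_of_real (f t) * (of_nat (2*m choose k) * cis (2 * pi * of_int (int k - int m) * (x0 - t)))"
        by (simp only: mult_ac)
    qed
    also have "\<dots> = complex_of_real (f t) * complex_of_real (4^m * cos(pi*(x0-t))^(2*m))"
      by (simp only: cos_pow_expand)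
    finally show ?thesis by simp
  qed
  moreover have "((\<lambda>t. complex_of_real (4^m * (f t * cos(pi*(x0-t))^(2*m)))) has_integral
       complex_of_real (4^m * integral {0..1} (\<lambda>t. f t * cos(pi*(x0-t))^(2*m)))) {0..1}"
  proof -
    have "continuous_on {0..1} (\<lambda>t. f t * cos(pi*(x0-t))^(2*m))"
      using f by (intro continuous_intros) (auto intro: continuous_on_subset)
    then have "((\<lambda>t. f t * cos(pi*(x0-t))^(2*m)) has_integral integral {0..1} (\<lambda>t. f t * cos(pi*(x0-t))^(2*m))) {0..1}"
      by (intro integrable_integral integrable_continuous_interval)
    then have "((\<lambda>t. 4^m * (f t * cos(pi*(x0-t))^(2*m))) has_integral 4^m * integral {0..1} (\<lambda>t. f t * cos(pi*(x0-t))^(2*m))) {0..1}"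
      by (rule has_integral_mult_right)
    then show ?thesis by (rule has_integral_of_real)
  qed
  ultimately have "(\<Sum>k\<le>2*m. ?c k * fourier_coeff f (int k - int m)) = complex_of_real (4^m * integral {0..1} (\<lambda>t. f t * cos(pi*(x0-t))^(2*m)))"
    by (simp only: eq has_integral_unique)
  then show ?thesis by (simp only: mult_ac)
qed


lemma fourier_coeff_one: "fourier_coeff (\<lambda>_. 1) j = (if j = 0 then 1 else 0)"
proof -
  have "((\<lambda>t::real. cis (2*pi* of_int (-j)*t)) has_integral (if -j = 0 then 1 else 0)) {0..1}"
    by (rule cis_int_has_integral)
  then have "((\<lambda>x. complex_of_real 1 * cis (- 2 * pi * real_of_int j * x)) has_integral (if j = 0 then 1 else 0)) {0..1}"
    by simp
  then show ?thesis unfolding fourier_coeff_def by (rule integral_unique)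
qed

lemma kernel_integral:
  "integral {0..1} (\<lambda>t. cos(pi*(x0-t))^(2*m)) = real (2*m choose m) / 4^m"
proof -
  have "complex_of_real (4^m * integral {0..1} (\<lambda>t. 1 * cos(pi*(x0-t))^(2*m)))
     = (\<Sum>k\<le>2*m. of_nat (2*m choose k) * fourier_coeff (\<lambda>_. 1) (int k - int m) * cis (2 * pi * of_int (int k - int m) * x0))"
    by (rule fourier_kernel_sum[symmetric]) simp
  also have "\<dots> = (\<Sum>k\<le>2*m. if k = m then of_nat (2*m choose m) else 0)"
    by (rule sum.cong[OF refl]) (simp add: fourier_coeff_one)
  also have "\<dots> = of_nat (2*m choose m)" by simp
  finally have "complex_of_real (4^m * integral {0..1} (\<lambda>t. cos(pi*(x0-t))^(2*m))) = complex_of_real (real (2*m choose m))"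
    by simp
  then have "4^m * integral {0..1} (\<lambda>t. cos(pi*(x0-t))^(2*m)) = real (2*m choose m)"
    by (simp only: of_real_eq_iff)
  then show ?thesis by (simp add: field_simps)
qed


lemma process_posdef:
  fixes N :: nat and c t :: "nat \<Rightarrow> real"
  assumes P: "continuous_stationary_gaussian_process M X K"
  shows "(\<Sum>i<N. \<Sum>j<N. c i * c j * K (t i - t j)) \<ge> 0"
proof -
  have int: "\<And>s u. integrable M (\<lambda>\<omega>. X s \<omega> * X u \<omega>)" and ev: "\<And>s u. (\<integral>\<omega>. X s \<omega> * X u \<omega> \<partial>M) = K (s - u)"
    using P unfolding continuous_stationary_gaussian_process_def by auto
  have sq: "(\<Sum>i<N. c i * X (t i) \<omega>)^2 = (\<Sum>i<N. \<Sum>j<N. c i * c j * (X (t i) \<omega> * X (t j) \<omega>))" for \<omega>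
    by (simp add: power2_eq_square sum_product mult_ac)
  have "(\<integral>\<omega>. (\<Sum>i<N. c i * X (t i) \<omega>)^2 \<partial>M) = (\<Sum>i<N. \<Sum>j<N. c i * c j * (\<integral>\<omega>. X (t i) \<omega> * X (t j) \<omega> \<partial>M))"
  proof -
    have i2: "\<And>i j. integrable M (\<lambda>\<omega>. c i * c j * (X (t i) \<omega> * X (t j) \<omega>))"
      by (rule integrable_mult_right) (rule int)
    have "(\<integral>\<omega>. (\<Sum>i<N. \<Sum>j<N. c i * c j * (X (t i) \<omega> * X (t j) \<omega>)) \<partial>M)
       = (\<Sum>i<N. (\<integral>\<omega>. (\<Sum>j<N. c i * c j * (X (t i) \<omega> * X (t j) \<omega>)) \<partial>M))"
      by (rule Bochner_Integration.integral_sum) (rule Bochner_Integration.integrable_sum, rule i2)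
    also have "\<dots> = (\<Sum>i<N. \<Sum>j<N. (\<integral>\<omega>. c i * c j * (X (t i) \<omega> * X (t j) \<omega>) \<partial>M))"
      by (rule sum.cong[OF refl], rule Bochner_Integration.integral_sum, rule i2)
    also have "\<dots> = (\<Sum>i<N. \<Sum>j<N. c i * c j * (\<integral>\<omega>. X (t i) \<omega> * X (t j) \<omega> \<partial>M))"
      by simp
    finally show ?thesis unfolding sq .
  qed
  also have "\<dots> = (\<Sum>i<N. \<Sum>j<N. c i * c j * K (t i - t j))" by (simp add: ev)
  finally have "(\<Sum>i<N. \<Sum>j<N. c i * c j * K (t i - t j)) = (\<integral>\<omega>. (\<Sum>i<N. c i * X (t i) \<omega>)^2 \<partial>M)" ..
  also have "\<dots> \<ge> 0" by simp
  finally show ?thesis .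
qed

lemma process_even:
  assumes P: "continuous_stationary_gaussian_process M X K"
  shows "K (- t) = K t"
proof -
  have ev: "\<And>s u. (\<integral>\<omega>. X s \<omega> * X u \<omega> \<partial>M) = K (s - u)"
    using P unfolding continuous_stationary_gaussian_process_def by auto
  have "K (0 - t) = K (t - 0)" using ev[of 0 t] ev[of t 0] by (simp add: mult.commute)
  then show ?thesis by simp
qed

lemma process_bound:
  assumes P: "continuous_stationary_gaussian_process M X K"
  shows "K t \<le> K 0"
proof -
  have "(\<Sum>i<2. \<Sum>j<2. (\<lambda>i::nat. if i = 0 then 1 else -1::real) i * (\<lambda>i::nat. if i = 0 then 1 else -1::real) j
      * K ((\<lambda>i::nat. if i = 0 then t else 0) i - (\<lambda>i::nat. if i = 0 then t else 0) j)) \<ge> 0"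
    by (rule process_posdef[OF P])
  then have "2 * K 0 - K t - K (-t) \<ge> 0" by (simp add: numeral_2_eq_2)
  then show ?thesis using process_even[OF P, of t] by simp
qed


lemma periodic_nat:
  assumes per: "\<forall>x. g (x + 1) = g (x::real)"
  shows "g (x + real n) = g x"
proof (induction n)
  case (Suc n)
  have "g (x + real (Suc n)) = g ((x + real n) + 1)" by (simp add: algebra_simps)
  also have "\<dots> = g (x + real n)" using per by blast
  finally show ?case using Suc by simp
qed simp

lemma periodic_int:
  assumes per: "\<forall>x. g (x + 1) = g (x::real)"
  shows "g (x + real_of_int k) = g x"
proof (cases "k \<ge> 0")
  case True
  then obtain n where "k = int n" by (metis nonneg_int_cases)
  then show ?thesis using periodic_nat[OF per] by simp
next
  case False
  define n where "n = nat (- k)"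
  then have k: "k = - int n" using False by simp
  have "g (x + real_of_int k) = g ((x + real_of_int k) + real n)" using periodic_nat[OF per] by simp
  also have "\<dots> = g x" using k by simp
  finally show ?thesis .
qed

lemma sum_shift_mod:
  fixes g :: "real \<Rightarrow> real" and N i :: nat
  assumes per: "\<forall>x. g (x + 1) = g x" and N: "N > 0"
  shows "(\<Sum>j<N. g ((real i - real j) / N)) = (\<Sum>d<N. g (real d / N))"
proof -
  define \<phi> where "\<phi> j = nat ((int i - int j) mod int N)" for j
  have eq: "g ((real i - real j) / N) = g (real (\<phi> j) / N)" for j
  proof -
    let ?z = "int i - int j"
    have "?z = ?z mod int N + int N * (?z div int N)" by simp
    then have "real_of_int ?z = real_of_int (?z mod int N) + real N * real_of_int (?z div int N)"
      by (metis of_int_add of_int_mult of_int_of_nat_eq)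
    then have "(real i - real j) / N = real_of_int (?z mod int N) / N + real_of_int (?z div int N)"
      using N by (simp add: field_simps)
    moreover have "real_of_int (?z mod int N) = real (\<phi> j)"
      using N by (simp add: \<phi>_def)
    ultimately show ?thesis using periodic_int[OF per] by simp
  qed
  have inj: "inj_on \<phi> {..<N}"
  proof (rule inj_onI)
    fix a b assume a: "a \<in> {..<N}" and b: "b \<in> {..<N}" and e: "\<phi> a = \<phi> b"
    then have "nat ((int i - int a) mod int N) = nat ((int i - int b) mod int N)"
      by (simp add: \<phi>_def)
    then show "a = b" using a b
      by (smt (verit, ccfv_SIG) int_nat_eq mod_diff_cong mod_int_pos_iff
    mod_pos_pos_trivial of_nat_0_le_iff of_nat_eq_iff of_nat_less_iff lessThan_iff)
  qed
  have sub: "\<phi> ` {..<N} \<subseteq> {..<N}"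
    using N by (auto simp: \<phi>_def nat_less_iff)
  have bij: "bij_betw \<phi> {..<N} {..<N}"
    using endo_inj_surj[OF _ sub inj] inj by (simp add: bij_betw_def)
  have "(\<Sum>j<N. g ((real i - real j) / N)) = (\<Sum>j<N. g (real (\<phi> j) / N))"
    using eq by simp
  also have "\<dots> = (\<Sum>d<N. g (real d / N))"
    by (rule sum.reindex_bij_betw[OF bij])
  finally show ?thesis .
qed


lemma cos_shift_int: "cos (2 * pi * real_of_int n * (x + 1)) = cos (2 * pi * real_of_int n * x)"
proof -
  have "2 * pi * real_of_int n * (x + 1) = 2 * pi * real_of_int n * x + (2 * pi) * real_of_int n"
    by (simp add: algebra_simps)
  then show ?thesis by (simp only: cos_add cos_int_2pin sin_int_2pin) simp?
qed

lemma discrete_pos: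
  fixes n :: int and N :: nat
  assumes P: "continuous_stationary_gaussian_process M X K" and per: "\<forall>x. K (x + 1) = K x" and N: "N > 0"
  shows "(\<Sum>d<N. K (real d / N) * cos (2 * pi * real_of_int n * (real d / N))) \<ge> 0"
proof -
  define g where "g x = K x * cos (2 * pi * real_of_int n * x)" for x
  have gper: "\<forall>x. g (x + 1) = g x" using per by (simp add: g_def cos_shift_int)
  define t where "t i = real i / N" for i :: nat
  define a where "a i = 2 * pi * real_of_int n * t i" for i :: nat
  have p1: "(\<Sum>i<N. \<Sum>j<N. cos (a i) * cos (a j) * K (t i - t j)) \<ge> 0"
    by (rule process_posdef[OF P])
  have p2: "(\<Sum>i<N. \<Sum>j<N. sin (a i) * sin (a j) * K (t i - t j)) \<ge> 0"
    by (rule process_posdef[OF P])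
  have "(\<Sum>i<N. \<Sum>j<N. cos (a i) * cos (a j) * K (t i - t j)) + (\<Sum>i<N. \<Sum>j<N. sin (a i) * sin (a j) * K (t i - t j))
      = (\<Sum>i<N. \<Sum>j<N. g ((real i - real j) / N))"
    unfolding sum.distrib[symmetric]
  proof (intro sum.cong refl)
    fix i j
    have e2: "a i - a j = 2 * pi * real_of_int n * ((real i - real j) / N)"
      by (simp add: a_def t_def algebra_simps diff_divide_distrib)
    have e1: "t i - t j = (real i - real j) / N" by (simp add: t_def diff_divide_distrib)
    have "cos (a i) * cos (a j) * K (t i - t j) + sin (a i) * sin (a j) * K (t i - t j)
        = cos (a i - a j) * K (t i - t j)" by (simp add: cos_diff algebra_simps)
    also have "\<dots> = g ((real i - real j) / N)" unfolding e1 e2 g_def by (simp only: mult.commute)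
    finally show "cos (a i) * cos (a j) * K (t i - t j) + sin (a i) * sin (a j) * K (t i - t j) = g ((real i - real j) / N)"
      .
  qed
  also have "\<dots> = (\<Sum>i<N. \<Sum>d<N. g (real d / N))"
    by (intro sum.cong refl sum_shift_mod[OF gper N])
  also have "\<dots> = real N * (\<Sum>d<N. g (real d / N))" by simp
  finally have "real N * (\<Sum>d<N. g (real d / N)) \<ge> 0" using p1 p2 by linarith
  then have "(\<Sum>d<N. g (real d / N)) \<ge> 0" using N by (simp add: zero_le_mult_iff)
  then show ?thesis by (simp add: g_def)
qed


lemma integral_split_n:
  fixes g :: "real \<Rightarrow> real" and n :: nat
  assumes g: "continuous_on {0..1} g" and n: "n > 0"
  shows "k \<le> n \<Longrightarrow> integral {0..real k / n} g = (\<Sum>d<k. integral {real d / n..real (Suc d) / n} g)"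
proof (induction k)
  case 0
  then show ?case by simp
next
  case (Suc k)
  have sub: "{0..real (Suc k) / n} \<subseteq> {0..1}" using Suc.prems n by (auto simp: field_simps)
  have "integral {0..real k / n} g + integral {real k / n..real (Suc k) / n} g = integral {0..real (Suc k) / n} g"
  proof (rule Henstock_Kurzweil_Integration.integral_combine)
    show "g integrable_on {0..real (Suc k) / n}"
      by (rule integrable_continuous_interval, rule continuous_on_subset[OF g sub])
  qed (use n in \<open>auto simp: divide_right_mono\<close>)
  then show ?case using Suc by simp
qed

lemma riemann_sum_tendsto:
  fixes g :: "real \<Rightarrow> real"
  assumes g: "continuous_on {0..1} g"
  shows "(\<lambda>N. (\<Sum>d<Suc N. g (real d / real (Suc N))) / real (Suc N)) \<longlonglongrightarrow> integral {0..1} g"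
proof (rule LIMSEQ_I)
  fix r :: real assume r: "r > 0"
  have uc: "uniformly_continuous_on {0..1} g" using g compact_uniformly_continuous by blast
  obtain \<delta> where \<delta>: "\<delta> > 0" and hd: "\<And>x x'. x \<in> {0..1} \<Longrightarrow> x' \<in> {0..1} \<Longrightarrow> dist x' x < \<delta> \<Longrightarrow> dist (g x') (g x) < r / 2"
    using uc r unfolding uniformly_continuous_on_def by (meson half_gt_zero)
  obtain N0 :: nat where N0: "1 / \<delta> < real N0" using reals_Archimedean2 by blast
  show "\<exists>no. \<forall>N\<ge>no. norm ((\<Sum>d<Suc N. g (real d / real (Suc N))) / real (Suc N) - integral {0..1} g) < r"
  proof (intro exI allI impI)
    fix N assume "N \<ge> N0"
    define n where "n = Suc N"
    have n0: "n > 0" by (simp add: n_def)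
    have nd: "1 / real n < \<delta>"
    proof -
      have "1 / \<delta> < real n" using N0 \<open>N \<ge> N0\<close> by (simp add: n_def)
      then show ?thesis using \<delta> n0 by (simp add: field_simps)
    qed
    have split: "integral {0..1} g = (\<Sum>d<n. integral {real d / n..real (Suc d) / n} g)"
      using integral_split_n[OF g n0, of n] n0 by simp
    have piece: "\<bar>integral {real d / n..real (Suc d) / n} g - g (real d / n) / n\<bar> \<le> (r/2) / n" if d: "d < n" for d
    proof -
      let ?a = "real d / n" and ?b = "real (Suc d) / n"
      have ab: "?a \<le> ?b" by (simp add: divide_right_mono)
      have bma: "?b - ?a = 1 / n" by (simp add: diff_divide_distrib[symmetric])
      have sub: "{?a..?b} \<subseteq> {0..1}" using d n0 by (auto simp: field_simps)
      have a01: "?a \<in> {0..1}" using d n0 by (auto simp: field_simps)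
      have cont: "continuous_on {?a..?b} (\<lambda>x. g x - g ?a)"
        by (intro continuous_intros continuous_on_subset[OF g sub])
      have "integral {?a..?b} g - g ?a / n = integral {?a..?b} (\<lambda>x. g x - g ?a)"
      proof -
        have i1: "g integrable_on {?a..?b}"
          by (rule integrable_continuous_interval, rule continuous_on_subset[OF g sub])
        have "integral {?a..?b} (\<lambda>x. g x - g ?a) = integral {?a..?b} g - integral {?a..?b} (\<lambda>x. g ?a)"
          by (rule integral_diff[OF i1]) (rule integrable_const_ivl)
        then show ?thesis using ab bma by simp
      qed
      also have "\<bar>\<dots>\<bar> \<le> (r/2) * (?b - ?a)"
      proof -
        have "norm (integral {?a..?b} (\<lambda>x. g x - g ?a)) \<le> (r/2) * (?b - ?a)"
        proof (rule integral_bound[OF ab cont])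
          fix x assume x: "x \<in> {?a..?b}"
          then have "x \<in> {0..1}" using sub by blast
          moreover have "dist x ?a < \<delta>" using x bma nd by (auto simp: dist_real_def)
          ultimately have "dist (g x) (g ?a) < r/2" using hd a01 by blast
          then show "norm (g x - g ?a) \<le> r/2" by (simp add: dist_real_def)
        qed
        then show ?thesis by simp
      qed
      finally show ?thesis using bma by simp
    qed
    have "\<bar>(\<Sum>d<n. g (real d / real n)) / real n - integral {0..1} g\<bar>
        = \<bar>(\<Sum>d<n. integral {real d / n..real (Suc d) / n} g - g (real d / n) / n)\<bar>"
      unfolding split sum_subtractf sum_divide_distrib by simp
    also have "\<dots> \<le> (\<Sum>d<n. \<bar>integral {real d / n..real (Suc d) / n} g - g (real d / n) / n\<bar>)"
      by (rule sum_abs)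
    also have "\<dots> \<le> (\<Sum>d<n. (r/2) / n)" by (intro sum_mono piece) simp
    also have "\<dots> = r/2" using n0 by simp
    also have "\<dots> < r" using r by simp
    finally show "norm ((\<Sum>d<Suc N. g (real d / real (Suc N))) / real (Suc N) - integral {0..1} g) < r"
      by (simp add: n_def)
  qed
qed


lemma Re_fourier_coeff:
  assumes f: "continuous_on UNIV f"
  shows "Re (fourier_coeff f n) = integral {0..1} (\<lambda>x. f x * cos (2 * pi * real_of_int n * x))"
proof -
  have "((Re \<circ> (\<lambda>x. complex_of_real (f x) * cis (- 2 * pi * real_of_int n * x))) has_integral Re (fourier_coeff f n)) {0..1}"
    by (rule has_integral_linear[OF fourier_coeff_has_integral[OF f] bounded_linear_Re])
  moreover have "(Re \<circ> (\<lambda>x. complex_of_real (f x) * cis (- 2 * pi * real_of_int n * x))) = (\<lambda>x. f x * cos (2 * pi * real_of_int n * x))"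
    by (rule ext) simp
  ultimately show ?thesis by (metis integral_unique)
qed

lemma Re_fourier_K_nonneg:
  assumes P: "continuous_stationary_gaussian_process M X K" and per: "\<forall>x. K (x + 1) = K x"
    and K: "continuous_on UNIV K"
  shows "Re (fourier_coeff K n) \<ge> 0"
proof -
  define g where "g x = K x * cos (2 * pi * real_of_int n * x)" for x
  have gc: "continuous_on {0..1} g" unfolding g_def
    by (intro continuous_intros continuous_on_subset[OF K]) auto
  have lim: "(\<lambda>N. (\<Sum>d<Suc N. g (real d / real (Suc N))) / real (Suc N)) \<longlonglongrightarrow> integral {0..1} g"
    by (rule riemann_sum_tendsto[OF gc])
  have "\<forall>N\<ge>0. 0 \<le> (\<Sum>d<Suc N. g (real d / real (Suc N))) / real (Suc N)"
    using discrete_pos[OF P per, of "Suc _" n] by (simp add: g_def)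
  then have "0 \<le> integral {0..1} g" using LIMSEQ_le_const[OF lim] by blast
  then show ?thesis using Re_fourier_coeff[OF K] unfolding g_def[abs_def] by simp
qed


lemma core_CS:
  fixes q K :: "real \<Rightarrow> real" and m :: nat and x0 :: real
  assumes qc: "continuous_on UNIV q" and Kc: "continuous_on UNIV K"
    and Rpos: "\<And>n. Re (fourier_coeff K n) \<ge> 0"
    and Kb: "\<And>t. K t \<le> K 0"
    and z: "\<And>n. Re (fourier_coeff K n) = 0 \<Longrightarrow> fourier_coeff q n = 0"
  shows "(integral {0..1} (\<lambda>t. q t * cos(pi*(x0-t))^(2*m)) / (real (2*m choose m) / 4^m))^2
        \<le> K 0 * (\<Sum>k\<le>2*m. (if Re (fourier_coeff K (int k - int m)) = 0 then 0
                 else (cmod (fourier_coeff q (int k - int m)))\<^sup>2 / Re (fourier_coeff K (int k - int m))))"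
proof -
  define Iq where "Iq = integral {0..1} (\<lambda>t. q t * cos(pi*(x0-t))^(2*m))"
  define C where "C k = real (2*m choose k)" for k
  define u where "u k = cmod (fourier_coeff q (int k - int m))" for k
  define r where "r k = Re (fourier_coeff K (int k - int m))" for k
  define h where "h k = (if r k = 0 then 0 else (u k)\<^sup>2 / r k)" for k
  define Bm where "Bm = real (2*m choose m)"
  have Bm0: "Bm > 0" by (simp add: Bm_def)
  have r0: "r k \<ge> 0" for k by (simp add: r_def Rpos)
  have u0: "r k = 0 \<Longrightarrow> u k = 0" for k using z by (simp add: r_def u_def)
  have Cle: "C k \<le> Bm" for k unfolding C_def Bm_def using binomial_maximum'[of m k] by simp
  have C0: "C k \<ge> 0" for k by (simp add: C_def)
  have s1: "complex_of_real (4^m * Iq) = (\<Sum>k\<le>2*m. of_nat (2*m choose k) * fourier_coeff q (int k - int m) * cis (2 * pi * of_int (int k - int m) * x0))"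
    unfolding Iq_def by (rule fourier_kernel_sum[OF qc, symmetric])
  have "\<bar>4^m * Iq\<bar> = cmod (complex_of_real (4^m * Iq))" by (rule norm_of_real[symmetric])
  also have "\<dots> \<le> (\<Sum>k\<le>2*m. cmod (of_nat (2*m choose k) * fourier_coeff q (int k - int m) * cis (2 * pi * of_int (int k - int m) * x0)))"
    unfolding s1 by (rule norm_sum)
  also have "\<dots> = (\<Sum>k\<le>2*m. C k * u k)"
    by (simp add: C_def u_def norm_mult)
  finally have a1: "\<bar>4^m * Iq\<bar> \<le> (\<Sum>k\<le>2*m. C k * u k)" .
  define x where "x k = (if r k = 0 then 0 else u k / sqrt (r k))" for k
  define y where "y k = C k * sqrt (r k)" for k
  have xy: "C k * u k = x k * y k" for k
    using u0[of k] r0[of k] by (auto simp: x_def y_def)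
  have xx: "(x k)\<^sup>2 = h k" for k
    using r0[of k] by (simp add: x_def h_def power_divide)
  have yy: "(y k)\<^sup>2 \<le> Bm * (C k * r k)" for k
  proof -
    have "(y k)\<^sup>2 = C k * C k * r k" using r0[of k] by (simp add: y_def power2_eq_square power_mult_distrib)
    also have "\<dots> \<le> Bm * C k * r k" using Cle[of k] C0[of k] r0[of k] by (intro mult_right_mono) auto
    finally show ?thesis by simp
  qed
  have s2: "complex_of_real (4^m * integral {0..1} (\<lambda>t. K t * cos(pi*(0-t))^(2*m)))
      = (\<Sum>k\<le>2*m. of_nat (2*m choose k) * fourier_coeff K (int k - int m) * cis (2 * pi * of_int (int k - int m) * 0))"
    by (rule fourier_kernel_sum[OF Kc, symmetric])
  have "(\<Sum>k\<le>2*m. C k * r k) = Re (\<Sum>k\<le>2*m. of_nat (2*m choose k) * fourier_coeff K (int k - int m) * cis (2 * pi * of_int (int k - int m) * 0))"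
    by (simp add: C_def r_def)
  also have "\<dots> = 4^m * integral {0..1} (\<lambda>t. K t * cos(pi*(0-t))^(2*m))"
    unfolding s2[symmetric] by simp
  also have "\<dots> \<le> 4^m * (K 0 * (Bm / 4^m))"
  proof -
    have cB: "continuous_on {0..1} (\<lambda>t. cos(pi*(0-t))^(2*m))" by (intro continuous_intros)
    have iB: "((\<lambda>t. cos(pi*(0-t))^(2*m)) has_integral Bm / 4^m) {0..1}"
      using kernel_integral[of 0 m] integrable_continuous_interval[OF cB] unfolding Bm_def
      by (metis integrable_integral)
    have iKB: "((\<lambda>t. K t * cos(pi*(0-t))^(2*m)) has_integral integral {0..1} (\<lambda>t. K t * cos(pi*(0-t))^(2*m))) {0..1}"
      by (intro integrable_integral integrable_continuous_interval continuous_intros continuous_on_subset[OF Kc]) auto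
    have "integral {0..1} (\<lambda>t. K t * cos(pi*(0-t))^(2*m)) \<le> K 0 * (Bm / 4^m)"
    proof (rule has_integral_le[OF iKB has_integral_mult_right[OF iB]])
      fix t :: real
      have "0 \<le> cos(pi*(0-t))^(2*m)" by (simp add: power_mult)
      then show "K t * cos(pi*(0-t))^(2*m) \<le> K 0 * cos(pi*(0-t))^(2*m)"
        using Kb[of t] by (rule mult_right_mono[rotated])
    qed
    then show ?thesis by (rule mult_left_mono) simp
  qed
  also have "\<dots> = K 0 * Bm" by simp
  finally have a2: "(\<Sum>k\<le>2*m. C k * r k) \<le> K 0 * Bm" .
  have "(4^m * Iq)^2 \<le> (\<Sum>k\<le>2*m. C k * u k)^2"
    using a1 by (metis abs_le_square_iff abs_of_nonneg power2_abs sum_nonneg C0 mult_nonneg_nonneg norm_ge_zero u_def order_trans abs_ge_zero)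
  also have "\<dots> = (\<Sum>k\<le>2*m. x k * y k)^2" by (simp add: xy)
  also have "\<dots> \<le> (\<Sum>k\<le>2*m. (x k)\<^sup>2) * (\<Sum>k\<le>2*m. (y k)\<^sup>2)" by (rule Cauchy_Schwarz_ineq_sum)
  also have "\<dots> \<le> (\<Sum>k\<le>2*m. h k) * (Bm * (K 0 * Bm))"
  proof (rule mult_mono)
    show "(\<Sum>k\<le>2*m. (x k)\<^sup>2) \<le> (\<Sum>k\<le>2*m. h k)" by (simp add: xx)
    have "(\<Sum>k\<le>2*m. (y k)\<^sup>2) \<le> (\<Sum>k\<le>2*m. Bm * (C k * r k))" by (rule sum_mono) (rule yy)
    also have "\<dots> = Bm * (\<Sum>k\<le>2*m. C k * r k)" by (simp add: sum_distrib_left)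
    also have "\<dots> \<le> Bm * (K 0 * Bm)" using a2 Bm0 by simp
    finally show "(\<Sum>k\<le>2*m. (y k)\<^sup>2) \<le> Bm * (K 0 * Bm)" .
    show "0 \<le> (\<Sum>k\<le>2*m. (y k)\<^sup>2)" by (simp add: sum_nonneg)
    show "0 \<le> (\<Sum>k\<le>2*m. h k)" using r0 by (auto simp: h_def intro!: sum_nonneg)
  qed
  finally have fin: "(4^m * Iq)^2 \<le> (\<Sum>k\<le>2*m. h k) * Bm^2 * K 0" by (simp add: power2_eq_square mult_ac)
  have "(Iq / (Bm / 4^m))^2 = (4^m * Iq)^2 / Bm^2" by (simp add: power_divide field_simps)
  also have "\<dots> \<le> (\<Sum>k\<le>2*m. h k) * K 0"
    using fin Bm0 by (simp add: divide_le_eq mult_ac)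
  finally show ?thesis unfolding Iq_def Bm_def h_def r_def u_def by (simp add: mult.commute)
qed


lemma cos_far_bound:
  fixes s \<delta> :: real
  assumes d: "0 < \<delta>" "\<delta> \<le> 1/2" and s: "\<bar>s\<bar> \<le> 1" "\<bar>s\<bar> \<ge> \<delta>" "\<bar>s - 1\<bar> \<ge> \<delta>" "\<bar>s + 1\<bar> \<ge> \<delta>"
  shows "\<bar>cos (pi * s)\<bar> \<le> cos (pi * \<delta>)"
proof -
  have main: "\<bar>cos (pi * s')\<bar> \<le> cos (pi * \<delta>)" if s': "\<delta> \<le> s'" "s' \<le> 1 - \<delta>" for s'
  proof -
    have "cos (pi * s') \<le> cos (pi * \<delta>)"
      using s' d by (intro cos_monotone_0_pi_le) auto
    moreover have "- cos (pi * s') \<le> cos (pi * \<delta>)"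
    proof -
      have "- cos (pi * s') = cos (pi * (1 - s'))" by (simp add: algebra_simps)
      also have "\<dots> \<le> cos (pi * \<delta>)" using s' d by (intro cos_monotone_0_pi_le) auto
      finally show ?thesis .
    qed
    ultimately show ?thesis by linarith
  qed
  show ?thesis
  proof (cases "s \<ge> 0")
    case True
    then show ?thesis using s by (intro main) auto
  next
    case False
    then have "\<bar>cos (pi * (- s))\<bar> \<le> cos (pi * \<delta>)" using s by (intro main) auto
    then show ?thesis by simp
  qed
qed

lemma central_binom_lower: "4^m \<le> real (2*m+1) * real (2*m choose m)"
proof -
  have "(\<Sum>k\<le>2*m. 2*m choose k) \<le> card {..2*m} * (2*m choose m)"
    using sum_bounded_above[of "{..2*m}" "\<lambda>k. 2*m choose k" "2*m choose m"] binomial_maximum' by simp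
  then have "2^(2*m) \<le> (2*m+1) * (2*m choose m)" by (simp add: choose_row_sum)
  then have "real (2^(2*m)) \<le> real ((2*m+1) * (2*m choose m))" by (simp only: of_nat_le_iff)
  moreover have "real (2^(2*m)) = (4::real)^m" by (simp add: power_mult)
  moreover have "real ((2*m+1) * (2*m choose m)) = real (2*m+1) * real (2*m choose m)" by (rule of_nat_mult)
  ultimately show ?thesis by simp
qed

lemma lim_poly_geom:
  fixes \<rho> :: real
  assumes "0 \<le> \<rho>" "\<rho> < 1"
  shows "(\<lambda>m. real (2*m+1) * \<rho>^(2*m)) \<longlonglongrightarrow> 0"
proof -
  have n: "norm (\<rho>^2) < 1" using assms by (simp add: abs_square_less_1)
  have "(\<lambda>m. 2 * (of_nat m * (\<rho>^2)^m) + (\<rho>^2)^m) \<longlonglongrightarrow> 2 * 0 + 0"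
    by (intro tendsto_intros powser_times_n_limit_0 LIMSEQ_power_zero n)
  moreover have "real (2*m+1) * \<rho>^(2*m) = 2 * (of_nat m * (\<rho>^2)^m) + (\<rho>^2)^m" for m
    by (simp only: power_mult[symmetric]) (simp add: algebra_simps)
  ultimately show ?thesis by simp
qed


lemma approx_identity:
  fixes q :: "real \<Rightarrow> real"
  assumes qc: "continuous_on UNIV q" and per: "\<forall>x. q (x + 1) = q x" and x0: "0 \<le> x0" "x0 \<le> 1"
  shows "(\<lambda>m. integral {0..1} (\<lambda>t. q t * cos(pi*(x0-t))^(2*m)) / (real (2*m choose m) / 4^m)) \<longlonglongrightarrow> q x0"
proof (rule LIMSEQ_I)
  fix \<epsilon> :: real assume e: "\<epsilon> > 0"
  have "compact (q ` {0..1})" by (intro compact_continuous_image continuous_on_subset[OF qc]) auto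
  then have "bounded (q ` {0..1})" by (rule compact_imp_bounded)
  then obtain M where M0: "M > 0" and M: "\<And>t. t \<in> {0..1} \<Longrightarrow> \<bar>q t\<bar> \<le> M"
    by (auto simp: bounded_pos)
  have "isCont q x0" using qc by (simp add: continuous_on_eq_continuous_at)
  then obtain \<delta>0 where d0: "\<delta>0 > 0" and hd0: "\<And>y. dist y x0 < \<delta>0 \<Longrightarrow> dist (q y) (q x0) < \<epsilon>/2"
    using e unfolding continuous_at_eps_delta by (meson half_gt_zero)
  define \<delta> where "\<delta> = min \<delta>0 (1/4)"
  have d: "0 < \<delta>" "\<delta> \<le> 1/2" "\<delta> \<le> \<delta>0" using d0 by (auto simp: \<delta>_def)
  define \<rho> where "\<rho> = cos (pi * \<delta>)"
  have pd1: "0 \<le> pi * \<delta>" using d by simp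
  have pd2: "pi * \<delta> \<le> pi / 2" using d pi_gt_zero by (simp add: field_simps)
  have \<rho>0: "0 \<le> \<rho>" unfolding \<rho>_def using pd1 pd2 pi_gt_zero by (intro cos_ge_zero) linarith+
  have \<rho>1: "\<rho> < 1" unfolding \<rho>_def using cos_monotone_0_pi[of 0 "pi * \<delta>"] d by simp
  have "(\<lambda>m. real (2*m+1) * \<rho>^(2*m)) \<longlonglongrightarrow> 0" by (rule lim_poly_geom[OF \<rho>0 \<rho>1])
  then have "eventually (\<lambda>m. real (2*m+1) * \<rho>^(2*m) < \<epsilon> / (4 * M)) sequentially"
    using e M0 by (intro order_tendstoD) auto
  then obtain no where no: "\<And>m. m \<ge> no \<Longrightarrow> real (2*m+1) * \<rho>^(2*m) < \<epsilon> / (4 * M)"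
    by (auto simp: eventually_sequentially)
  show "\<exists>no. \<forall>m\<ge>no. norm (integral {0..1} (\<lambda>t. q t * cos(pi*(x0-t))^(2*m)) / (real (2*m choose m) / 4^m) - q x0) < \<epsilon>"
  proof (intro exI allI impI)
    fix m assume m: "m \<ge> no"
    define B where "B t = cos(pi*(x0-t))^(2*m)" for t
    define c where "c = real (2*m choose m) / 4^m"
    define Iq where "Iq = integral {0..1} (\<lambda>t. q t * B t)"
    have c0: "c > 0" by (simp add: c_def)
    have B0: "B t \<ge> 0" for t by (simp add: B_def power_mult)
    have cB: "continuous_on {0..1} B" unfolding B_def by (intro continuous_intros)
    have iB: "(B has_integral c) {0..1}"
      using kernel_integral[of x0 m] integrable_continuous_interval[OF cB] unfolding c_def B_def
      by (metis integrable_integral)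
    have iqB: "((\<lambda>t. q t * B t) has_integral Iq) {0..1}" unfolding Iq_def B_def
      by (intro integrable_integral integrable_continuous_interval continuous_intros continuous_on_subset[OF qc]) auto
    have iF: "((\<lambda>t. (q t - q x0) * B t) has_integral Iq - q x0 * c) {0..1}"
    proof -
      have "((\<lambda>t. q t * B t - q x0 * B t) has_integral Iq - q x0 * c) {0..1}"
        by (intro has_integral_diff iqB has_integral_mult_right iB)
      then show ?thesis by (simp add: algebra_simps)
    qed
    have iG: "((\<lambda>t. \<epsilon>/2 * B t + 2 * M * \<rho>^(2*m)) has_integral \<epsilon>/2 * c + 2 * M * \<rho>^(2*m)) {0..1}"
    proof -
      have hc: "((\<lambda>t. k) has_integral k) {0..1::real}" for k :: real
        using has_integral_const_real[where a=0 and b=1 and c=k] by simp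
      have "((\<lambda>t::real. 2 * M * \<rho>^(2*m)) has_integral 2 * M * \<rho>^(2*m)) {0..1}"
        by (rule hc)
      then show ?thesis by (rule has_integral_add[OF has_integral_mult_right[OF iB]])
    qed
    have pw: "\<bar>(q t - q x0) * B t\<bar> \<le> \<epsilon>/2 * B t + 2 * M * \<rho>^(2*m)" if t: "t \<in> {0..1}" for t
    proof -
      define s where "s = x0 - t"
      have s1: "\<bar>s\<bar> \<le> 1" using t x0 by (auto simp: s_def)
      have absB: "\<bar>(q t - q x0) * B t\<bar> = \<bar>q t - q x0\<bar> * B t" using B0[of t] by (simp add: abs_mult)
      have rhs0: "0 \<le> 2 * M * \<rho>^(2*m)" using M0 \<rho>0 by simp
      show ?thesis
      proof (cases "\<bar>s\<bar> < \<delta> \<or> \<bar>s - 1\<bar> < \<delta> \<or> \<bar>s + 1\<bar> < \<delta>")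
        case True
        have "\<exists>y. q y = q t \<and> dist y x0 < \<delta>0"
        proof -
          consider "\<bar>s\<bar> < \<delta>" | "\<bar>s - 1\<bar> < \<delta>" | "\<bar>s + 1\<bar> < \<delta>" using True by blast
          then show ?thesis
          proof cases
            case 1 then show ?thesis using d by (intro exI[of _ t]) (auto simp: s_def dist_real_def)
          next
            case 2
            have "q (t + 1) = q t" using per by blast
            then show ?thesis using 2 d by (intro exI[of _ "t+1"]) (auto simp: s_def dist_real_def)
          next
            case 3
            have "q ((t - 1) + 1) = q (t - 1)" using per by blast
            then have "q (t - 1) = q t" by simp
            then show ?thesis using 3 d by (intro exI[of _ "t-1"]) (auto simp: s_def dist_real_def)
          qed
        qed
        then have "\<bar>q t - q x0\<bar> < \<epsilon>/2" using hd0 by (metis dist_real_def)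
        then have "\<bar>q t - q x0\<bar> * B t \<le> \<epsilon>/2 * B t" using B0[of t] by (intro mult_right_mono) auto
        then show ?thesis using absB rhs0 by linarith
      next
        case False
        then have far: "\<bar>s\<bar> \<ge> \<delta>" "\<bar>s - 1\<bar> \<ge> \<delta>" "\<bar>s + 1\<bar> \<ge> \<delta>" by auto
        have cb: "\<bar>cos (pi * s)\<bar> \<le> \<rho>" unfolding \<rho>_def by (rule cos_far_bound[OF d(1,2) s1 far])
        have "B t = \<bar>cos (pi * s)\<bar>^(2*m)" by (simp add: B_def s_def power_even_abs)
        also have "\<dots> \<le> \<rho>^(2*m)" using cb by (intro power_mono) auto
        finally have Bb: "B t \<le> \<rho>^(2*m)" .
        have qb: "\<bar>q t - q x0\<bar> \<le> 2 * M" using M[OF t] M[of x0] x0 by auto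
        have "\<bar>q t - q x0\<bar> * B t \<le> (2 * M) * \<rho>^(2*m)"
          using qb Bb B0[of t] M0 by (intro mult_mono) auto
        moreover have "0 \<le> \<epsilon>/2 * B t" using e B0[of t] by simp
        ultimately show ?thesis using absB by linarith
      qed
    qed
    have le1: "Iq - q x0 * c \<le> \<epsilon>/2 * c + 2 * M * \<rho>^(2*m)"
      by (rule has_integral_le[OF iF iG]) (use pw in fastforce)
    have le2: "-(Iq - q x0 * c) \<le> \<epsilon>/2 * c + 2 * M * \<rho>^(2*m)"
      by (rule has_integral_le[OF has_integral_neg[OF iF] iG]) (use pw in fastforce)
    have abs1: "\<bar>Iq - q x0 * c\<bar> \<le> \<epsilon>/2 * c + 2 * M * \<rho>^(2*m)" using le1 le2 by linarith
    have cinv: "1 / c \<le> real (2*m+1)"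
      using central_binom_lower[of m] by (simp add: c_def field_simps)
    have "\<bar>Iq / c - q x0\<bar> = \<bar>Iq - q x0 * c\<bar> / c" using c0 by (simp add: field_simps)
    also have "\<dots> \<le> (\<epsilon>/2 * c + 2 * M * \<rho>^(2*m)) / c" using abs1 c0 by (intro divide_right_mono) auto
    also have "\<dots> = \<epsilon>/2 + 2 * M * \<rho>^(2*m) * (1 / c)" using c0 by (simp add: field_simps)
    also have "\<dots> \<le> \<epsilon>/2 + 2 * M * \<rho>^(2*m) * real (2*m+1)"
      using cinv M0 \<rho>0 by (intro add_left_mono mult_left_mono) auto
    also have "\<dots> = \<epsilon>/2 + 2 * M * (real (2*m+1) * \<rho>^(2*m))" by simp
    also have "\<dots> < \<epsilon>/2 + 2 * M * (\<epsilon> / (4 * M))"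
      using no[OF m] M0 by (intro add_strict_left_mono mult_strict_left_mono) auto
    also have "\<dots> = \<epsilon>" using M0 by (simp add: field_simps)
    finally show "norm (integral {0..1} (\<lambda>t. q t * cos(pi*(x0-t))^(2*m)) / (real (2*m choose m) / 4^m) - q x0) < \<epsilon>"
      by (simp add: Iq_def B_def c_def)
  qed
qed


lemma nonneg_int0:
  fixes f :: "real \<Rightarrow> real"
  assumes c: "continuous_on {0..1} f" and nn: "\<And>x. x \<in> {0..1} \<Longrightarrow> f x \<ge> 0"
    and i: "integral {0..1} f = 0" and x: "x \<in> {0..1}"
  shows "f x = 0"
proof -
  have hi: "(f has_integral 0) {0..1}" using i integrable_continuous_interval[OF c]
    by (metis integrable_integral)
  show ?thesis
    by (rule has_integral_0_cbox_imp_0[of 0 1 f]) (use c nn hi x in auto)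
qed

lemma smooth_props:
  assumes s: "smooth_fun p"
  shows "DERIV p x :> deriv p x" and "continuous_on UNIV p" and "continuous_on UNIV (deriv p)"
proof -
  have d0: "p differentiable (at y)" for y
  proof -
    have "((deriv ^^ 0) p) differentiable (at y)" using s unfolding smooth_fun_def by blast
    then show ?thesis by simp
  qed
  have d1: "deriv p differentiable (at y)" for y
  proof -
    have "((deriv ^^ 1) p) differentiable (at y)" using s unfolding smooth_fun_def by blast
    then show ?thesis by simp
  qed
  show "DERIV p x :> deriv p x" using d0 DERIV_deriv_iff_real_differentiable by blast
  show "continuous_on UNIV p"
    by (intro continuous_at_imp_continuous_on ballI differentiable_imp_continuous_within d0)
  show "continuous_on UNIV (deriv p)"
    by (intro continuous_at_imp_continuous_on ballI differentiable_imp_continuous_within d1)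
qed

lemma good_point:
  assumes s: "smooth_fun p" and per: "\<forall>x. p (x + 1) = p x" and i: "integral {0..1} p = 0"
  shows "\<exists>x0. p x0 = 0 \<and> deriv p x0 \<le> 0"
proof (cases "\<exists>a. p a > 0")
  case True
  then obtain a where pa: "p a > 0" by blast
  have pc: "continuous_on UNIV p" by (rule smooth_props(2)[OF s])
  have "\<exists>c\<in>{0..1}. p c \<le> 0"
  proof (rule ccontr)
    assume "\<not> ?thesis"
    then have "\<And>x. x \<in> {0..1} \<Longrightarrow> p x > 0" by (auto simp: not_le)
    moreover have "p 0 = 0"
      by (rule nonneg_int0[OF continuous_on_subset[OF pc] _ i]) (use calculation in \<open>auto intro: less_imp_le\<close>)
    ultimately show False by (metis atLeastAtMost_iff less_irrefl order_refl zero_le_one)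
  qed
  then obtain c where pc0: "p c \<le> 0" by blast
  define b where "b = c + real_of_int (\<lceil>a - c\<rceil> + 1)"
  have ba: "b > a" unfolding b_def by linarith
  have pb: "p b \<le> 0" using pc0 periodic_int[OF per, of c "\<lceil>a - c\<rceil> + 1"] by (simp only: b_def)
  define S where "S = {x \<in> {a..b}. p x \<le> 0}"
  have Sne: "S \<noteq> {}" using ba pb by (auto simp: S_def)
  have Sbdd: "bdd_below S" by (auto simp: S_def bdd_below_def)
  have "closed {x. p x \<le> (\<lambda>_. 0) x}" by (rule closed_Collect_le[OF pc continuous_on_const])
  then have "closed ({a..b} \<inter> {x. p x \<le> 0})" by (intro closed_Int) auto
  moreover have "S = {a..b} \<inter> {x. p x \<le> 0}" by (auto simp: S_def)
  ultimately have Scl: "closed S" by simp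
  define x0 where "x0 = Inf S"
  have x0S: "x0 \<in> S" unfolding x0_def by (rule closed_contains_Inf[OF Sne Sbdd Scl])
  have px0: "p x0 \<le> 0" and x0ab: "a \<le> x0" "x0 \<le> b" using x0S by (auto simp: S_def)
  have ax0: "a < x0" using pa px0 x0ab by (metis order_le_less not_le)
  have pos: "p y > 0" if "a \<le> y" "y < x0" for y
  proof (rule ccontr)
    assume "\<not> p y > 0"
    then have "y \<in> S" using that x0ab by (auto simp: S_def)
    then have "x0 \<le> y" unfolding x0_def using Sbdd by (rule cInf_lower)
    then show False using that by simp
  qed
  have px0': "p x0 = 0"
  proof (rule ccontr)
    assume "p x0 \<noteq> 0"
    then have "p x0 < 0" using px0 by simp
    then obtain y where y: "a \<le> y" "y \<le> x0" "p y = 0"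
      using IVT2'[of p x0 0 a] pa ax0 continuous_on_subset[OF pc] by force
    then have "y \<noteq> x0" using \<open>p x0 < 0\<close> by auto
    then show False using pos[of y] y by simp
  qed
  have "deriv p x0 \<le> 0"
  proof (rule ccontr)
    assume "\<not> deriv p x0 \<le> 0"
    then obtain d where d: "d > 0" and hd: "\<And>h. h > 0 \<Longrightarrow> h < d \<Longrightarrow> p (x0 - h) < p x0"
      using DERIV_pos_inc_left[OF smooth_props(1)[OF s, of x0]] by force
    define h where "h = min (d/2) ((x0 - a)/2)"
    have h: "h > 0" "h < d" "h \<le> (x0 - a)/2" using d ax0 unfolding h_def by (auto simp: min_def)
    have "p (x0 - h) < 0" using hd[OF h(1,2)] px0' by simp
    moreover have "p (x0 - h) > 0" using h ax0 by (intro pos) auto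
    ultimately show False by simp
  qed
  then show ?thesis using px0' by blast
next
  case False
  then have np: "\<And>x. p x \<le> 0" by (simp add: not_less)
  have pc: "continuous_on UNIV p" by (rule smooth_props(2)[OF s])
  have "(\<lambda>x. - p x) 0 = 0"
    by (rule nonneg_int0) (use np i in \<open>auto intro: continuous_intros continuous_on_subset[OF pc]\<close>)
  then have p0: "p 0 = 0" by simp
  have "deriv p 0 = 0"
    by (rule DERIV_local_max[OF smooth_props(1)[OF s, of 0], of 1]) (use np p0 in auto)
  then show ?thesis using p0 by auto
qed


lemma nn_count_ge_sum:
  fixes F :: "'b \<Rightarrow> ennreal"
  assumes "finite A"
  shows "(\<Sum>a\<in>A. F a) \<le> (\<integral>\<^sup>+n. F n \<partial>count_space UNIV)"
proof -
  have "(\<integral>\<^sup>+n. F n * indicator A n \<partial>count_space UNIV) = (\<Sum>a\<in>A. F a * emeasure (count_space UNIV) {a})"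
    by (rule nn_integral_indicator_finite[OF assms]) auto
  also have "\<dots> = (\<Sum>a\<in>A. F a)" by simp
  finally have e: "(\<integral>\<^sup>+n. F n * indicator A n \<partial>count_space UNIV) = (\<Sum>a\<in>A. F a)" .
  have "(\<integral>\<^sup>+n. F n * indicator A n \<partial>count_space UNIV) \<le> (\<integral>\<^sup>+n. F n \<partial>count_space UNIV)"
    by (intro nn_integral_mono) (auto split: split_indicator)
  then show ?thesis using e by simp
qed

lemma J_lower:
  fixes K :: "real \<Rightarrow> real" and M :: "'a measure" and X :: "real \<Rightarrow> 'a \<Rightarrow> real"
  assumes Kc: "continuous_on UNIV K"
    and Kper: "\<forall>x. K (x + 1) = K x"
    and P: "continuous_stationary_gaussian_process M X K"
    and K0: "K 0 > 0" and lam: "lam < 0" and qA: "q \<in> A_set lam"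
  shows "ennreal (lam\<^sup>2 / K 0) \<le> inv_cov_form K q"
proof -
  obtain p where s: "smooth_fun p" and pper: "\<forall>x. p (x + 1) = p x" and pint: "integral {0..1} p = 0"
    and qdef: "q = (\<lambda>x. lam + deriv p x + (p x)\<^sup>2)"
    using qA unfolding A_set_def by blast
  have qc: "continuous_on UNIV q" unfolding qdef
    using smooth_props(2,3)[OF s] by (intro continuous_intros) auto
  have dper: "deriv p (x + 1) = deriv p x" for x
  proof -
    have "DERIV p (x + 1) :> deriv p (x + 1)" by (rule smooth_props(1)[OF s])
    then have "DERIV (\<lambda>y. p (y + 1)) x :> deriv p (x + 1)" by (simp only: DERIV_shift)
    moreover have "(\<lambda>y. p (y + 1)) = p" using pper by auto
    ultimately have "DERIV p x :> deriv p (x + 1)" by simp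
    then show ?thesis using DERIV_imp_deriv by metis
  qed
  have qper: "\<forall>x. q (x + 1) = q x" unfolding qdef using pper dper by simp
  obtain x0 where px0: "p x0 = 0" and dx0: "deriv p x0 \<le> 0" using good_point[OF s pper pint] by blast
  define x1 where "x1 = x0 - real_of_int \<lfloor>x0\<rfloor>"
  have x1: "0 \<le> x1" "x1 \<le> 1" unfolding x1_def by linarith+
  have "q (x1 + real_of_int \<lfloor>x0\<rfloor>) = q x1" by (rule periodic_int[OF qper])
  then have qx1: "q x1 = q x0" by (simp add: x1_def)
  have qx0: "q x0 \<le> lam" unfolding qdef using px0 dx0 by simp
  have "(-lam)\<^sup>2 \<le> (- q x1)\<^sup>2" using qx1 qx0 lam by (intro power_mono) auto
  then have lam2: "lam\<^sup>2 \<le> (q x1)\<^sup>2" by simp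
  show ?thesis
  proof (cases "inv_cov_form K q = \<infinity>")
    case True then show ?thesis by simp
  next
    case False
    define F where "F n = (if Re (fourier_coeff K n) = 0
               then (if fourier_coeff q n = 0 then 0 else \<infinity>)
               else ennreal ((cmod (fourier_coeff q n))\<^sup>2 / Re (fourier_coeff K n)))" for n
    have S: "inv_cov_form K q = (\<integral>\<^sup>+n. F n \<partial>count_space UNIV)" unfolding inv_cov_form_def F_def ..
    define Sr where "Sr = enn2real (inv_cov_form K q)"
    have SSr: "inv_cov_form K q = ennreal Sr" using False by (simp add: Sr_def ennreal_enn2real_if)
    have z: "fourier_coeff q n = 0" if "Re (fourier_coeff K n) = 0" for n
    proof (rule ccontr)
      assume "fourier_coeff q n \<noteq> 0"
      then have "F n = \<infinity>" using that by (simp add: F_def)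
      moreover have "F n \<le> inv_cov_form K q" using nn_count_ge_sum[of "{n}" F] S by simp
      ultimately show False using False by (simp add: top_unique)
    qed
    define h where "h n = (if Re (fourier_coeff K n) = 0 then 0
                 else (cmod (fourier_coeff q n))\<^sup>2 / Re (fourier_coeff K n))" for n
    have Rpos: "\<And>n. Re (fourier_coeff K n) \<ge> 0" by (rule Re_fourier_K_nonneg[OF P Kper Kc])
    have h0: "h n \<ge> 0" for n using Rpos[of n] by (simp add: h_def)
    have Fh: "F n = ennreal (h n)" for n using z[of n] by (simp add: F_def h_def)
    have sumle: "(\<Sum>k\<le>2*m. h (int k - int m)) \<le> Sr" for m
    proof -
      have inj: "inj_on (\<lambda>k. int k - int m) {..2*m}" by (auto simp: inj_on_def)
      have "ennreal (\<Sum>k\<le>2*m. h (int k - int m)) = (\<Sum>k\<le>2*m. F (int k - int m))"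
        using h0 by (simp add: Fh sum_ennreal)
      also have "\<dots> = (\<Sum>n\<in>(\<lambda>k. int k - int m) ` {..2*m}. F n)"
        by (rule sum.reindex[OF inj, symmetric, unfolded comp_def])
      also have "\<dots> \<le> inv_cov_form K q" unfolding S by (rule nn_count_ge_sum) simp
      also have "\<dots> = ennreal Sr" by (rule SSr)
      finally have "ennreal (\<Sum>k\<le>2*m. h (int k - int m)) \<le> ennreal Sr" .
      moreover have "0 \<le> Sr" by (simp add: Sr_def)
      ultimately show ?thesis by (simp add: ennreal_le_iff)
    qed
    define A where "A m = integral {0..1} (\<lambda>t. q t * cos(pi*(x1-t))^(2*m)) / (real (2*m choose m) / 4^m)" for m
    have Ale: "(A m)\<^sup>2 \<le> K 0 * Sr" for m
    proof -
      have "(A m)\<^sup>2 \<le> K 0 * (\<Sum>k\<le>2*m. h (int k - int m))"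
        unfolding A_def h_def
        by (rule core_CS[OF qc Kc Rpos process_bound[OF P] z])
      also have "\<dots> \<le> K 0 * Sr" using sumle[of m] K0 by simp
      finally show ?thesis .
    qed
    have lim: "A \<longlonglongrightarrow> q x1" unfolding A_def[abs_def] by (rule approx_identity[OF qc qper x1])
    have "(\<lambda>m. (A m)\<^sup>2) \<longlonglongrightarrow> (q x1)\<^sup>2" by (intro tendsto_intros lim)
    then have "(q x1)\<^sup>2 \<le> K 0 * Sr" using Ale by (intro LIMSEQ_le_const2) auto
    then have "lam\<^sup>2 \<le> K 0 * Sr" using lam2 by linarith
    then have "lam\<^sup>2 / K 0 \<le> Sr" using K0 by (simp add: divide_le_eq mult.commute)
    then show ?thesis unfolding SSr by (rule ennreal_leI)
  qed
qed

theorem theorem4: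
  fixes K :: "real \<Rightarrow> real" and M :: "'a measure" and X :: "real \<Rightarrow> 'a \<Rightarrow> real"
  assumes "continuous_on UNIV K"
    and "\<forall>x. K (x + 1) = K x"
    and "continuous_stationary_gaussian_process M X K"
    and "integral {0..1} K = 1"
  shows "Liminf at_bot (\<lambda>lam. (INF q\<in>A_set lam. J_functional K q) / ennreal (lam\<^sup>2))
           \<ge> ennreal (1 / (2 * K 0))"
proof (cases "K 0 > 0")
  case False
  then have "ennreal (1 / (2 * K 0)) = 0" by (intro ennreal_neg) (simp add: divide_nonpos_nonneg)
  then show ?thesis by simp
next
  case K0: True
  show ?thesis
  proof (rule Liminf_bounded)
    show "eventually (\<lambda>lam. ennreal (1 / (2 * K 0)) \<le> (INF q\<in>A_set lam. J_functional K q) / ennreal (lam\<^sup>2)) at_bot"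
    proof (rule eventually_at_bot_linorderI[of "-1"])
      fix lam :: real assume "lam \<le> -1"
      then have lam: "lam < 0" by simp
      have l2: "lam\<^sup>2 > 0" using lam by simp
      have "ennreal (lam\<^sup>2 / (2 * K 0)) \<le> (INF q\<in>A_set lam. J_functional K q)"
      proof (rule INF_greatest)
        fix q assume qA: "q \<in> A_set lam"
        have "ennreal (lam\<^sup>2 / K 0) / 2 \<le> inv_cov_form K q / 2"
          by (rule divide_right_mono_ennreal[OF J_lower[OF assms(1,2,3) K0 lam qA]])
        moreover have "ennreal (lam\<^sup>2 / K 0) / 2 = ennreal (lam\<^sup>2 / (2 * K 0))"
          using K0 by (subst ennreal_divide_numeral) (auto simp: field_simps)
        ultimately show "ennreal (lam\<^sup>2 / (2 * K 0)) \<le> J_functional K q"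
          by (simp add: J_functional_def)
      qed
      then have "ennreal (lam\<^sup>2 / (2 * K 0)) / ennreal (lam\<^sup>2) \<le> (INF q\<in>A_set lam. J_functional K q) / ennreal (lam\<^sup>2)"
        by (rule divide_right_mono_ennreal)
      moreover have "ennreal (lam\<^sup>2 / (2 * K 0)) / ennreal (lam\<^sup>2) = ennreal (1 / (2 * K 0))"
        using l2 K0 by (subst divide_ennreal) (auto simp: field_simps)
      ultimately show "ennreal (1 / (2 * K 0)) \<le> (INF q\<in>A_set lam. J_functional K q) / ennreal (lam\<^sup>2)"
        by simp
    qed
  qed
qed

end
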